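(* If $P_2$ is strictly increasing on $[0,1]$, then there exists at most one sequence $T=(T_k)\in\mathcal{T}$ satisfying $$\exp\left(\int_0^x\log\bigl(1-P_1(T_k(\alpha))\bigr)\,d\alpha\right)+\prod_{i=1}^k\bigl(1-P_2(T_i(x))\bigr)=1\qquad\text{for all }x\ge0,\ k\in\mathbb{N}.$$
   Context: $P_1,P_2:[0,1]\to[0,1]$ are continuously differentiable, increasing, $P_j(0)=0$, $P_j(1)=1$, $P_j(t)<1$ for $t<1$. The class $\mathcal{T}$: all sequences $T=(T_1,T_2,\dots)$ of functions on $[0,\infty)$ such that each $T_k$ is continuous on $[0,\infty)$ and continuously differentiable on $(0,\infty)$; $0<T_k(x)\le1$; $T_k'(x)<0$ and $T_{k+1}(x)<T_k(x)$ for $x>0$; $T_k(0)=1$. *)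

theory Defs
  imports "HOL-Analysis.Analysis"
begin

text \<open>Standing assumptions on P_1, P_2 (only their values on [0,1] matter).\<close>
definition admissible_P :: "(real \<Rightarrow> real) \<Rightarrow> bool" where
  "admissible_P P \<longleftrightarrow>
     P C1_differentiable_on {0..1} \<and> mono_on {0..1} P \<and>
     P 0 = 0 \<and> P 1 = 1 \<and> (\<forall>t\<in>{0..<1}. P t < 1)"

text \<open>The class T. Sequences are indexed from 0: T k here is T_(k+1) of the paper.
  Only the values on [0,infinity) matter.\<close>
definition in_class_T :: "(nat \<Rightarrow> real \<Rightarrow> real) \<Rightarrow> bool" where
  "in_class_T T \<longleftrightarrow> (\<forall>k.
     continuous_on {0..} (T k) \<and>
     T k C1_differentiable_on {0<..} \<and>
     (\<forall>x\<ge>0. 0 < T k x \<and> T k x \<le> 1) \<and>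
     (\<forall>x>0. deriv (T k) x < 0) \<and>
     (\<forall>x>0. T (Suc k) x < T k x) \<and>
     T k 0 = 1)"

text \<open>exp (integral_0^x log (g a) da) for 0 < g \<le> 1 on (0,x]: the integrand is
  nonpositive, so the (possibly improper) integral is taken as a Lebesgue integral of
  a function of fixed sign; if it diverges to -infinity the exponential is 0.\<close>
definition exp_int_log :: "(real \<Rightarrow> real) \<Rightarrow> real \<Rightarrow> real" where
  "exp_int_log g x =
     (let I = (\<integral>\<^sup>+ a. ennreal (- ln (g a)) * indicator {0..x} a \<partial>lborel)
      in if I = \<infinity> then 0 else exp (- enn2real I))"

definition solves_system :: "(real \<Rightarrow> real) \<Rightarrow> (real \<Rightarrow> real) \<Rightarrow> (nat \<Rightarrow> real \<Rightarrow> real) \<Rightarrow> bool" where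
  "solves_system P1 P2 T \<longleftrightarrow> (\<forall>k. \<forall>x\<ge>0.
     exp_int_log (\<lambda>a. 1 - P1 (T k a)) x + (\<Prod>i\<le>k. 1 - P2 (T i x)) = 1)"

end

theory Submission
  imports Defs
begin

lemma admP:
  assumes "admissible_P P"
  shows "continuous_on {0..1} P" "\<And>t. t \<in> {0..1} \<Longrightarrow> 0 \<le> P t"
    "\<And>t. t \<in> {0..1} \<Longrightarrow> P t \<le> 1" "\<And>t. 0 \<le> t \<Longrightarrow> t < 1 \<Longrightarrow> P t < 1"
    "\<And>s t. s \<in> {0..1} \<Longrightarrow> t \<in> {0..1} \<Longrightarrow> s \<le> t \<Longrightarrow> P s \<le> P t"
    "P 0 = 0" "P 1 = 1"
proof -
  have c1: "P C1_differentiable_on {0..1}" and m: "mono_on {0..1} P" and p0: "P 0 = 0"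
    and p1: "P 1 = 1" and lt: "\<forall>t\<in>{0..<1}. P t < 1"
    using assms unfolding admissible_P_def by auto
  show "continuous_on {0..1} P"
    using c1 unfolding C1_differentiable_on_eq
    by (meson continuous_at_imp_continuous_on differentiable_imp_continuous_within)
  show mo: "\<And>s t. s \<in> {0..1} \<Longrightarrow> t \<in> {0..1} \<Longrightarrow> s \<le> t \<Longrightarrow> P s \<le> P t"
    using m by (simp add: mono_on_def)
  show "\<And>t. t \<in> {0..1} \<Longrightarrow> 0 \<le> P t" using mo[of 0] p0 by auto
  show "\<And>t. t \<in> {0..1} \<Longrightarrow> P t \<le> 1" using mo[of _ 1] p1 by auto
  show "\<And>t. 0 \<le> t \<Longrightarrow> t < 1 \<Longrightarrow> P t < 1" using lt by auto
  show "P 0 = 0" "P 1 = 1" by fact+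
qed

lemma classT:
  assumes "in_class_T U"
  shows "\<And>x. 0 \<le> x \<Longrightarrow> 0 < U k x" "\<And>x. 0 \<le> x \<Longrightarrow> U k x \<le> 1"
    "continuous_on {0..} (U k)" "U k 0 = 1" "\<And>x. 0 < x \<Longrightarrow> U k x < 1"
proof -
  have c: "continuous_on {0..} (U k)" and d: "U k C1_differentiable_on {0<..}"
    and b: "\<forall>x\<ge>0. 0 < U k x \<and> U k x \<le> 1" and dr: "\<forall>x>0. deriv (U k) x < 0"
    and z: "U k 0 = 1"
    using assms unfolding in_class_T_def by auto
  show "\<And>x. 0 \<le> x \<Longrightarrow> 0 < U k x" "\<And>x. 0 \<le> x \<Longrightarrow> U k x \<le> 1" using b by auto
  show "continuous_on {0..} (U k)" "U k 0 = 1" by fact+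
  fix x :: real assume x: "0 < x"
  have "continuous_on {0..x} (U k)" using c by (rule continuous_on_subset) auto
  moreover have "\<And>z. 0 < z \<Longrightarrow> z < x \<Longrightarrow> U k differentiable (at z)"
    using d unfolding C1_differentiable_on_eq by auto
  ultimately obtain l z where "0 < z" "z < x" "DERIV (U k) z :> l" "U k x - U k 0 = (x - 0) * l"
    using MVT[OF x] by blast
  moreover have "deriv (U k) z = l" using \<open>DERIV (U k) z :> l\<close> by (rule DERIV_imp_deriv)
  ultimately have "l < 0" using dr by auto
  with \<open>U k x - U k 0 = (x - 0) * l\<close> x z show "U k x < 1"
    using mult_pos_neg[of x l] by simp
qed

lemma contphi:
  assumes P1: "admissible_P P1" and U: "in_class_T U" and a0: "0 \<le> a0"
  shows "continuous_on {a0<..b} (\<lambda>t. - ln (1 - P1 (U k t)))"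
proof -
  have "continuous_on {a0<..b} (U k)"
    using classT(3)[OF U, of k] by (rule continuous_on_subset) (use a0 in auto)
  then have "continuous_on {a0<..b} (\<lambda>t. P1 (U k t))"
    by (rule continuous_on_compose2[OF admP(1)[OF P1]])
       (use classT(1,2)[OF U, of _ k] a0 in \<open>fastforce simp: image_subset_iff intro: less_imp_le\<close>)
  then have c: "continuous_on {a0<..b} (\<lambda>t. 1 - P1 (U k t))"
    by (intro continuous_intros)
  have nz: "\<forall>t\<in>{a0<..b}. 1 - P1 (U k t) \<noteq> 0"
  proof
    fix t assume "t \<in> {a0<..b}"
    then have "0 < t" using a0 by auto
    then have "U k t < 1" "0 < U k t" using classT(5,1)[OF U] by auto
    then have "P1 (U k t) < 1" using admP(4)[OF P1] by auto
    then show "1 - P1 (U k t) \<noteq> 0" by simp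
  qed
  have "continuous_on {a0<..b} (\<lambda>t. ln (1 - P1 (U k t)))"
    by (rule continuous_on_ln[OF c]) (use nz in blast)
  then show ?thesis by (rule continuous_on_minus)
qed

lemma measphi:
  assumes P1: "admissible_P P1" and U: "in_class_T U" and a0: "0 \<le> a0"
  shows "(\<lambda>t. ennreal (- ln (1 - P1 (U k t))) * indicator {a0<..b} t) \<in> borel_measurable lborel"
proof -
  have "(\<lambda>t. indicator {a0<..b} t *\<^sub>R (- ln (1 - P1 (U k t)))) \<in> borel_measurable borel"
    by (rule borel_measurable_continuous_on_indicator) (use contphi[OF P1 U a0] in auto)
  then have "(\<lambda>t. ennreal (indicator {a0<..b} t *\<^sub>R (- ln (1 - P1 (U k t))))) \<in> borel_measurable borel"
    by measurable
  moreover have "(\<lambda>t. ennreal (indicator {a0<..b} t *\<^sub>R (- ln (1 - P1 (U k t))))) =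
     (\<lambda>t. ennreal (- ln (1 - P1 (U k t))) * indicator {a0<..b} t)"
    by (auto simp: indicator_def)
  ultimately show ?thesis by simp
qed

lemma int0:
  assumes P1: "admissible_P P1" and U: "in_class_T U"
  shows "(\<lambda>t. ennreal (- ln (1 - P1 (U k t))) * indicator {0..x} t) =
     (\<lambda>t. ennreal (- ln (1 - P1 (U k t))) * indicator {0<..x} t)"
proof (rule ext)
  fix t show "ennreal (- ln (1 - P1 (U k t))) * indicator {0..x} t =
     ennreal (- ln (1 - P1 (U k t))) * indicator {0<..x} t"
    using classT(4)[OF U, of k] admP(7)[OF P1] by (cases "t = 0") (auto simp: indicator_def)
qed

lemma intsplit:
  assumes P1: "admissible_P P1" and U: "in_class_T U" and x: "0 \<le> x0" "x0 \<le> x1"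
  shows "(\<integral>\<^sup>+ t. ennreal (- ln (1 - P1 (U k t))) * indicator {0..x1} t \<partial>lborel) =
     (\<integral>\<^sup>+ t. ennreal (- ln (1 - P1 (U k t))) * indicator {0..x0} t \<partial>lborel) +
     (\<integral>\<^sup>+ t. ennreal (- ln (1 - P1 (U k t))) * indicator {x0<..x1} t \<partial>lborel)"
proof -
  have "(\<lambda>t. ennreal (- ln (1 - P1 (U k t))) * indicator {0..x1} t) =
     (\<lambda>t. ennreal (- ln (1 - P1 (U k t))) * indicator {0<..x0} t + ennreal (- ln (1 - P1 (U k t))) * indicator {x0<..x1} t)"
    unfolding int0[OF P1 U] using x by (auto simp: indicator_def)
  then show ?thesis unfolding int0[OF P1 U]
    by (simp only:) (rule nn_integral_add; rule measphi[OF P1 U]; use x in simp)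
qed

lemma int_at0:
  assumes P1: "admissible_P P1" and U: "in_class_T U"
  shows "(\<integral>\<^sup>+ t. ennreal (- ln (1 - P1 (U k t))) * indicator {0..0} t \<partial>lborel) = 0"
  unfolding int0[OF P1 U] by simp

lemma sup_arg:
  fixes D :: "real \<Rightarrow> real"
  assumes cont: "continuous_on {0..} D" and d0: "D 0 \<le> 0"
    and step: "\<And>x0 x1. 0 \<le> x0 \<Longrightarrow> x0 < x1 \<Longrightarrow> D x0 \<le> 0 \<Longrightarrow>
       (\<forall>a\<in>{x0<..x1}. D a > 0) \<Longrightarrow> D x1 \<le> 0"
    and x: "0 \<le> x"
  shows "D x \<le> 0"
proof (rule ccontr)
  assume neg: "\<not> D x \<le> 0"
  define A where "A = {0..x} \<inter> D -` {..0}"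
  have "continuous_on {0..x} D" using cont by (rule continuous_on_subset) auto
  then have cl: "closed A" unfolding A_def by (rule continuous_closed_preimage) auto
  have A0: "0 \<in> A" using d0 x by (auto simp: A_def)
  have bdd: "bdd_above A" by (auto simp: A_def bdd_above_def)
  define s where "s = Sup A"
  have sA: "s \<in> A" unfolding s_def using closed_contains_Sup[OF _ bdd cl] A0 by auto
  then have s0: "0 \<le> s" "s \<le> x" "D s \<le> 0" by (auto simp: A_def)
  have "s \<noteq> x" using neg s0 by auto
  then have sx: "s < x" using s0 by auto
  have "\<forall>a\<in>{s<..x}. D a > 0"
  proof
    fix a assume a: "a \<in> {s<..x}"
    show "D a > 0"
    proof (rule ccontr)
      assume "\<not> D a > 0"
      then have "a \<in> A" using a s0 by (auto simp: A_def)
      then have "a \<le> s" unfolding s_def by (rule cSup_upper[OF _ bdd])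
      then show False using a by auto
    qed
  qed
  then have "D x \<le> 0" using step[OF s0(1) sx s0(3)] by blast
  then show False using neg by simp
qed

lemma contP2:
  assumes P2: "admissible_P P2" and U: "in_class_T U"
  shows "continuous_on {0..} (\<lambda>x. P2 (U i x))"
  by (rule continuous_on_compose2[OF admP(1)[OF P2] classT(3)[OF U]])
     (use classT(1,2)[OF U, of _ i] in \<open>fastforce simp: image_subset_iff intro: less_imp_le\<close>)

definition II :: "(real \<Rightarrow> real) \<Rightarrow> (real \<Rightarrow> real) \<Rightarrow> real \<Rightarrow> ennreal" where
  "II P1 u x = (\<integral>\<^sup>+ t. ennreal (- ln (1 - P1 (u t))) * indicator {0..x} t \<partial>lborel)"

lemma P2U:
  assumes P2: "admissible_P P2" and U: "in_class_T U" and x: "0 \<le> x"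
  shows "0 \<le> 1 - P2 (U i x)" "1 - P2 (U i x) \<le> 1"
  using admP(2,3)[OF P2, of "U i x"] classT(1,2)[OF U x, of i] by auto

lemma setupU:
  assumes P1: "admissible_P P1" and P2: "admissible_P P2"
    and sm: "strict_mono_on {0..1} P2"
    and U: "in_class_T U" and sol: "solves_system P1 P2 U" and x: "0 \<le> x"
  shows "II P1 (U k) x \<noteq> \<infinity>"
    "exp (- enn2real (II P1 (U k) x)) = 1 - (\<Prod>i<k. 1 - P2 (U i x)) * (1 - P2 (U k x))"
proof -
  have e: "exp_int_log (\<lambda>a. 1 - P1 (U k a)) x + (\<Prod>i\<le>k. 1 - P2 (U i x)) = 1"
    using sol x unfolding solves_system_def by blast
  have pr: "(\<Prod>i\<le>k. 1 - P2 (U i x)) = (\<Prod>i<k. 1 - P2 (U i x)) * (1 - P2 (U k x))"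
    by (simp add: lessThan_Suc_atMost[symmetric])
  have eil: "exp_int_log (\<lambda>a. 1 - P1 (U k a)) x =
     (if II P1 (U k) x = \<infinity> then 0 else exp (- enn2real (II P1 (U k) x)))"
    by (simp add: exp_int_log_def II_def Let_def)
  have c01: "0 \<le> (\<Prod>i<k. 1 - P2 (U i x))" "(\<Prod>i<k. 1 - P2 (U i x)) \<le> 1"
    using P2U[OF P2 U x] by (auto intro: prod_nonneg prod_le_1)
  have "P2 0 < P2 (U k x)"
    using sm classT(1,2)[OF U x, of k] by (auto simp: strict_mono_on_def)
  then have lt: "1 - P2 (U k x) < 1" using admP(6)[OF P2] by simp
  have "(\<Prod>i<k. 1 - P2 (U i x)) * (1 - P2 (U k x)) \<le> 1 - P2 (U k x)"
    using c01 P2U[OF P2 U x, of k] by (simp add: mult_left_le_one_le)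
  with lt have "(\<Prod>i\<le>k. 1 - P2 (U i x)) < 1" unfolding pr by linarith
  then show ni: "II P1 (U k) x \<noteq> \<infinity>" using e eil by (auto split: if_splits)
  show "exp (- enn2real (II P1 (U k) x)) = 1 - (\<Prod>i<k. 1 - P2 (U i x)) * (1 - P2 (U k x))"
    using e eil ni pr by simp
qed

lemma core:
  assumes P1: "admissible_P P1" and P2: "admissible_P P2"
    and sm: "strict_mono_on {0..1} P2"
    and U: "in_class_T U" and solU: "solves_system P1 P2 U"
    and V: "in_class_T V" and solV: "solves_system P1 P2 V"
    and IH: "\<And>i x. i < k \<Longrightarrow> 0 \<le> x \<Longrightarrow> U i x = V i x"
    and x: "0 \<le> x"
  shows "II P1 (U k) x \<le> II P1 (V k) x"
proof -
  define c where "c x = (\<Prod>i<k. 1 - P2 (U i x))" for x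
  have cV: "c x = (\<Prod>i<k. 1 - P2 (V i x))" if "0 \<le> x" for x
    unfolding c_def using IH that by (intro prod.cong) auto
  have c0: "0 \<le> c x" if "0 \<le> x" for x
    unfolding c_def using P2U[OF P2 U that] by (auto intro: prod_nonneg)
  define FU where "FU x = enn2real (II P1 (U k) x)" for x
  define FV where "FV x = enn2real (II P1 (V k) x)" for x
  have finU: "II P1 (U k) x \<noteq> \<infinity>" if "0 \<le> x" for x
    using setupU[OF P1 P2 sm U solU that] by blast
  have finV: "II P1 (V k) x \<noteq> \<infinity>" if "0 \<le> x" for x
    using setupU[OF P1 P2 sm V solV that] by blast
  have eU: "exp (- FU x) = 1 - c x * (1 - P2 (U k x))" if "0 \<le> x" for x
    using setupU[OF P1 P2 sm U solU that] unfolding FU_def c_def by blast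
  have eV: "exp (- FV x) = 1 - c x * (1 - P2 (V k x))" if "0 \<le> x" for x
    using setupU[OF P1 P2 sm V solV that] cV[OF that] unfolding FV_def by simp
  have cc: "continuous_on {0..} c" unfolding c_def
    by (intro continuous_on_prod continuous_on_diff continuous_on_const contP2[OF P2 U])
  have contF: "continuous_on {0..} F" if F: "\<And>x. 0 \<le> x \<Longrightarrow> exp (- F x) = 1 - c x * (1 - P2 (W k x))"
    and W: "in_class_T W" for F W
  proof -
    have g: "continuous_on {0..} (\<lambda>x. 1 - c x * (1 - P2 (W k x)))"
      by (intro continuous_on_diff continuous_on_mult continuous_on_const cc contP2[OF P2 W])
    have nz: "\<forall>x\<in>{0..}. 1 - c x * (1 - P2 (W k x)) \<noteq> 0"
    proof
      fix x :: real assume "x \<in> {0..}"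
      then have "exp (- F x) = 1 - c x * (1 - P2 (W k x))" using F by simp
      then show "1 - c x * (1 - P2 (W k x)) \<noteq> 0" by (metis exp_not_eq_zero)
    qed
    have "continuous_on {0..} (\<lambda>x. ln (1 - c x * (1 - P2 (W k x))))"
      by (rule continuous_on_ln[OF g]) (use nz in blast)
    then have c2: "continuous_on {0..} (\<lambda>x. - ln (1 - c x * (1 - P2 (W k x))))"
      by (rule continuous_on_minus)
    have "\<And>x. x \<in> {0..} \<Longrightarrow> - ln (1 - c x * (1 - P2 (W k x))) = F x"
    proof -
      fix x :: real assume "x \<in> {0..}"
      then have "exp (- F x) = 1 - c x * (1 - P2 (W k x))" using F by simp
      then have "ln (1 - c x * (1 - P2 (W k x))) = - F x" by (metis ln_exp)
      then show "- ln (1 - c x * (1 - P2 (W k x))) = F x" by simp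
    qed
    then show ?thesis using continuous_on_cong[THEN iffD1, OF refl _ c2] by blast
  qed
  have cD: "continuous_on {0..} (\<lambda>x. FU x - FV x)"
    by (intro continuous_on_diff contF[OF eU U] contF[OF eV V])
  have ptw: "ennreal (- ln (1 - P1 (U k a))) \<le> ennreal (- ln (1 - P1 (V k a)))"
    if a: "0 < a" and lt: "FU a > FV a" for a
  proof -
    have "exp (- FU a) < exp (- FV a)" using lt by simp
    then have "c a * (1 - P2 (V k a)) < c a * (1 - P2 (U k a))"
      using eU[of a] eV[of a] a by simp
    moreover have "0 \<le> c a" using c0 a by simp
    ultimately have "1 - P2 (V k a) < 1 - P2 (U k a)"
      by (rule mult_left_less_imp_less)
    then have p2: "P2 (U k a) < P2 (V k a)" by simp
    have "U k a < V k a"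
    proof (rule ccontr)
      assume "\<not> U k a < V k a"
      then have "P2 (V k a) \<le> P2 (U k a)"
        using admP(5)[OF P2, of "V k a" "U k a"] classT(1,2)[OF U, of a k] classT(1,2)[OF V, of a k] a
        by auto
      then show False using p2 by simp
    qed
    then have p1: "P1 (U k a) \<le> P1 (V k a)"
      using admP(5)[OF P1, of "U k a" "V k a"] classT(1,2)[OF U, of a k] classT(1,2)[OF V, of a k] a
      by auto
    have "P1 (V k a) < 1" using admP(4)[OF P1] classT(1,5)[OF V, of a k] a by auto
    then have "ln (1 - P1 (V k a)) \<le> ln (1 - P1 (U k a))" using p1 by simp
    then show ?thesis by (intro ennreal_leI) simp
  qed
  have "FU x - FV x \<le> 0"
  proof (rule sup_arg[OF cD _ _ x])
    show "FU 0 - FV 0 \<le> 0"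
      using int_at0[OF P1 U, of k] int_at0[OF P1 V, of k] by (simp add: FU_def FV_def II_def)
  next
    fix x0 x1 :: real
    assume x0: "0 \<le> x0" "x0 < x1" "FU x0 - FV x0 \<le> 0" and pos: "\<forall>a\<in>{x0<..x1}. FU a - FV a > 0"
    have "(\<integral>\<^sup>+ t. ennreal (- ln (1 - P1 (U k t))) * indicator {x0<..x1} t \<partial>lborel) \<le>
          (\<integral>\<^sup>+ t. ennreal (- ln (1 - P1 (V k t))) * indicator {x0<..x1} t \<partial>lborel)"
    proof (rule nn_integral_mono)
      fix t show "ennreal (- ln (1 - P1 (U k t))) * indicator {x0<..x1} t \<le>
          ennreal (- ln (1 - P1 (V k t))) * indicator {x0<..x1} t"
        using ptw[of t] pos x0 by (cases "t \<in> {x0<..x1}") auto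
    qed
    moreover have "II P1 (U k) x0 \<le> II P1 (V k) x0"
    proof -
      have "II P1 (U k) x0 = ennreal (FU x0)" using finU[OF x0(1)] by (simp add: FU_def less_top)
      also have "\<dots> \<le> ennreal (FV x0)" using x0 by (intro ennreal_leI) simp
      also have "\<dots> = II P1 (V k) x0" using finV[OF x0(1)] by (simp add: FV_def less_top)
      finally show ?thesis .
    qed
    ultimately have "II P1 (U k) x1 \<le> II P1 (V k) x1"
      unfolding II_def intsplit[OF P1 U x0(1) less_imp_le[OF x0(2)]] intsplit[OF P1 V x0(1) less_imp_le[OF x0(2)]]
      by (intro add_mono) (auto simp: II_def)
    then have "FU x1 \<le> FV x1" unfolding FU_def FV_def
      using finV[of x1] x0 by (intro enn2real_mono) (auto simp: less_top)
    then show "FU x1 - FV x1 \<le> 0" by simp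
  qed
  then have "ennreal (FU x) \<le> ennreal (FV x)" by (intro ennreal_leI) simp
  moreover have "II P1 (U k) x = ennreal (FU x)" using finU[OF x] by (simp add: FU_def less_top)
  moreover have "II P1 (V k) x = ennreal (FV x)" using finV[OF x] by (simp add: FV_def less_top)
  ultimately show ?thesis by simp
qed

theorem corollary3:
  fixes P1 P2 :: "real \<Rightarrow> real" and T S :: "nat \<Rightarrow> real \<Rightarrow> real"
  assumes "admissible_P P1" and "admissible_P P2"
    and "strict_mono_on {0..1} P2"
    and "in_class_T T" and "solves_system P1 P2 T"
    and "in_class_T S" and "solves_system P1 P2 S"
  shows "\<forall>k. \<forall>x\<ge>0. T k x = S k x"
proof
  note P1 = assms(1) and P2 = assms(2) and sm = assms(3) and T = assms(4) and solT = assms(5)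
    and S = assms(6) and solS = assms(7)
  fix k
  show "\<forall>x\<ge>0. T k x = S k x"
  proof (induction k rule: less_induct)
    case (less k)
    have IH1: "\<And>i x. i < k \<Longrightarrow> 0 \<le> x \<Longrightarrow> T i x = S i x" using less by blast
    have IH2: "\<And>i x. i < k \<Longrightarrow> 0 \<le> x \<Longrightarrow> S i x = T i x" using less by fastforce
    show ?case
    proof (intro allI impI)
      fix x :: real assume x: "0 \<le> x"
      show "T k x = S k x"
      proof (cases "x = 0")
        case True
        then show ?thesis using classT(4)[OF T, of k] classT(4)[OF S, of k] by simp
      next
        case False
        then have xp: "0 < x" using x by simp
        have "II P1 (T k) x = II P1 (S k) x"
          using core[OF P1 P2 sm T solT S solS IH1 x] core[OF P1 P2 sm S solS T solT IH2 x]
          by (rule order.antisym)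
        then have "(\<Prod>i<k. 1 - P2 (T i x)) * (1 - P2 (T k x)) = (\<Prod>i<k. 1 - P2 (S i x)) * (1 - P2 (S k x))"
          using setupU(2)[OF P1 P2 sm T solT x, of k] setupU(2)[OF P1 P2 sm S solS x, of k] by simp
        moreover have "(\<Prod>i<k. 1 - P2 (S i x)) = (\<Prod>i<k. 1 - P2 (T i x))"
          using IH1 x by (intro prod.cong) auto
        moreover have "0 < (\<Prod>i<k. 1 - P2 (T i x))"
        proof (rule prod_pos)
          fix i assume "i \<in> {..<k}"
          have "P2 (T i x) < 1" using admP(4)[OF P2] classT(1,5)[OF T, of x i] xp by auto
          then show "0 < 1 - P2 (T i x)" by simp
        qed
        ultimately have "1 - P2 (T k x) = 1 - P2 (S k x)"
          by (metis mult_left_cancel less_irrefl)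
        then have "P2 (T k x) = P2 (S k x)" by simp
        then show ?thesis
          using strict_mono_on_eqD[OF sm] classT(1,2)[OF T x, of k] classT(1,2)[OF S x, of k]
          by (metis atLeastAtMost_iff less_imp_le)
      qed
    qed
  qed
qed

end
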